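(* Let $\Gamma,P,\mu$ be real numbers with $0\le\Gamma<1$ and $0\le P\le1$, and set \[ B_G^{(2)}:=[-4\Gamma P+2P-2\Gamma+3]+\mu[3-2\Gamma-4P]. \] (i) If $-1/3<\mu<0$ and $|2\Gamma-1|\le\min\{1,(1-P)/P\}$, then $B_G^{(2)}>0$. (ii) If $\mu=0$ and $|2\Gamma-1|<\min\{1,(1-P)/P\}$, then $B_G^{(2)}>0$. Here $(1-P)/P$ is interpreted as $+\infty$ when $P=0$.
   Context: In the application, $\Gamma=\Gamma(k)\in[0,1]$ is the fraction of the potential enstrophy spectrum at wavenumber $k$ contained in the upper layer, $P=P(k)\in[0,1]$ is the fraction of the energy spectrum at $k$ that is baroclinic, and $\mu$ is the Ekman extrapolation parameter; $B_G^{(2)}$ is a coefficient in the potential enstrophy dissipation rate spectrum of the asymmetric Ekman term. *)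

theory Defs
  imports Complex_Main "HOL-Library.Extended_Real"
begin

definition BG2 :: "real \<Rightarrow> real \<Rightarrow> real \<Rightarrow> real" where
  "BG2 \<Gamma> P \<mu> = (-4*\<Gamma>*P + 2*P - 2*\<Gamma> + 3) + \<mu> * (3 - 2*\<Gamma> - 4*P)"

definition ratio_bound :: "real \<Rightarrow> ereal" where
  "ratio_bound P = (if P = 0 then \<infinity> else ereal ((1 - P) / P))"

end

theory Submission
  imports Defs
begin

lemma cond_le:
  assumes "ereal \<bar>g\<bar> \<le> min 1 (ratio_bound P)" "0 \<le> P"
  shows "\<bar>g\<bar> \<le> 1 \<and> (0 < P \<longrightarrow> \<bar>g\<bar> * P \<le> 1 - P)"
  using assms by (cases "P = 0") (auto simp: ratio_bound_def field_simps)

lemma cond_lt: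
  assumes "ereal \<bar>g\<bar> < min 1 (ratio_bound P)" "0 \<le> P"
  shows "\<bar>g\<bar> < 1 \<and> (0 < P \<longrightarrow> \<bar>g\<bar> * P < 1 - P)"
  using assms by (cases "P = 0") (auto simp: ratio_bound_def field_simps)

lemma gP_small:
  fixes g P :: real
  assumes "P \<le> 1/2" "0 \<le> P" "g < 1"
  shows "g*P \<le> P"
proof (cases "g \<ge> 0")
  case True then show ?thesis using assms mult_right_mono[of g 1 P] by simp
next
  case False then show ?thesis using assms mult_nonpos_nonneg[of g P] by simp
qed

theorem proposition5:
  fixes \<Gamma> P \<mu> :: real
  assumes "0 \<le> \<Gamma>" and "\<Gamma> < 1" and "0 \<le> P" and "P \<le> 1"
  shows "(-1/3 < \<mu> \<and> \<mu> < 0 \<and> ereal \<bar>2*\<Gamma> - 1\<bar> \<le> min 1 (ratio_bound P) \<longrightarrow> BG2 \<Gamma> P \<mu> > 0)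
       \<and> (\<mu> = 0 \<and> ereal \<bar>2*\<Gamma> - 1\<bar> < min 1 (ratio_bound P) \<longrightarrow> BG2 \<Gamma> P \<mu> > 0)"
proof (intro conjI impI)
  define g where "g = 2*\<Gamma> - 1"
  have B: "BG2 \<Gamma> P \<mu> = 2 - 2*(g*P) - g + \<mu>*(2 - g - 4*P)"
    by (simp add: BG2_def g_def algebra_simps)
  have g1: "g < 1" using assms by (simp add: g_def)
  have gP0: "g < 0 \<Longrightarrow> g*P \<le> 0" using assms mult_nonpos_nonneg[of g P] by simp
  {
    assume h: "-1/3 < \<mu> \<and> \<mu> < 0 \<and> ereal \<bar>2*\<Gamma> - 1\<bar> \<le> min 1 (ratio_bound P)"
    have c: "\<bar>g\<bar> \<le> 1 \<and> (0 < P \<longrightarrow> \<bar>g\<bar> * P \<le> 1 - P)"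
      using cond_le[of g P] h assms by (simp add: g_def)
    have A: "2 - 2*(g*P) - g \<ge> 0 \<and> 2 + 2*P - 3*(g*P) - g > 0"
    proof (cases "P \<le> 1/2")
      case True then show ?thesis using g1 gP_small[of P g] assms by simp
    next
      case False
      then have "g*P \<le> 1 - P" using c gP0 by (cases "g \<ge> 0") auto
      then show ?thesis using False g1 by simp
    qed
    have e: "BG2 \<Gamma> P \<mu> = (1 + 3*\<mu>) * (2 - 2*(g*P) - g) + (-2*\<mu>) * (2 + 2*P - 3*(g*P) - g)"
      unfolding B by (simp add: algebra_simps)
    have "(1 + 3*\<mu>) * (2 - 2*(g*P) - g) \<ge> 0" using h A by simp
    moreover have "(-2*\<mu>) * (2 + 2*P - 3*(g*P) - g) > 0" using h A by (simp add: mult_neg_pos)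
    ultimately show "BG2 \<Gamma> P \<mu> > 0" using e by linarith
  }
  {
    assume h: "\<mu> = 0 \<and> ereal \<bar>2*\<Gamma> - 1\<bar> < min 1 (ratio_bound P)"
    have c: "\<bar>g\<bar> < 1 \<and> (0 < P \<longrightarrow> \<bar>g\<bar> * P < 1 - P)"
      using cond_lt[of g P] h assms by (simp add: g_def)
    have "2 - 2*(g*P) - g > 0"
    proof (cases "P \<le> 1/2")
      case True then show ?thesis using g1 gP_small[of P g] assms by simp
    next
      case False
      then have "g*P < 1 - P" using c gP0 by (cases "g \<ge> 0") auto
      then show ?thesis using False g1 by simp
    qed
    then show "BG2 \<Gamma> P \<mu> > 0" using B h by simp
  }
qed

end
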